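(* Let $M$ be a closed manifold immersed in $(V,\omega)=(\mathbb{R}^{2d},\sum_i dx_i\wedge dy_i)$ with $\dim M\ge d$. Then $M$ satisfies condition (LL): for every $P\in V$ there exists a point $x\in M$ such that $T_xM\not\subset(x-P)^\omega$.
   Context: Points of $M$ are identified with their images and $T_xM\subset V$ is the tangent space at $x$. For $u\in V$, $u^\omega=\{\xi\in V:\omega(\xi,u)=0\}$ is the symplectic complement of the line $\mathbb{R}u$. *)

theory Defs
  imports "HOL-Analysis.Analysis"
begin

type_synonym 'd symp_vec = "(real^'d) \<times> (real^'d)"

definition omega :: "'d::finite symp_vec \<Rightarrow> 'd symp_vec \<Rightarrow> real" where
  "omega u v = (\<Sum>i\<in>UNIV. fst u $ i * snd v $ i - snd u $ i * fst v $ i)"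

definition symp_compl :: "'d::finite symp_vec \<Rightarrow> 'd symp_vec set" where
  "symp_compl u = {\<xi>. omega \<xi> u = 0}"

text \<open>C-infinity on an open set U of R^m: a family F of iterated partial derivatives,
  F [] = g on U, and each F is is differentiable with partial derivative in direction e_i
  equal to F (i # is).\<close>
definition smooth_on :: "(real^'m::finite) set \<Rightarrow> (real^'m \<Rightarrow> 'b::real_normed_vector) \<Rightarrow> bool" where
  "smooth_on U g \<longleftrightarrow> (\<exists>F :: 'm list \<Rightarrow> real^'m \<Rightarrow> 'b.
      (\<forall>x\<in>U. F [] x = g x) \<and>
      (\<forall>is. \<forall>x\<in>U. (F is has_derivative (\<lambda>h. \<Sum>i\<in>UNIV. (h $ i) *\<^sub>R F (i # is) x)) (at x)))"

text \<open>A closed (compact, boundaryless, nonempty) smooth manifold X of dimension CARD('m),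
  given by an atlas A of charts (U, phi) with U open in R^m and phi a homeomorphism of U onto
  an open subset of X, together with a smooth immersion f : X -> V (smoothness of the manifold
  structure is the one induced by f: each f o phi is a smooth immersion).\<close>
definition closed_immersed_manifold ::
  "'a topology \<Rightarrow> ((real^'m::finite) set \<times> (real^'m \<Rightarrow> 'a)) set \<Rightarrow> ('a \<Rightarrow> 'd::finite symp_vec) \<Rightarrow> bool" where
  "closed_immersed_manifold X A f \<longleftrightarrow>
     compact_space X \<and> Hausdorff_space X \<and> topspace X \<noteq> {} \<and>
     topspace X = (\<Union>(U, \<phi>)\<in>A. \<phi> ` U) \<and>
     (\<forall>(U, \<phi>)\<in>A.
        open U \<and> openin X (\<phi> ` U) \<and>
        homeomorphic_map (subtopology euclidean U) (subtopology X (\<phi> ` U)) \<phi> \<and>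
        smooth_on U (f \<circ> \<phi>) \<and>
        (\<forall>u\<in>U. \<exists>D. ((f \<circ> \<phi>) has_derivative D) (at u) \<and> inj D))"

definition tangent_space ::
  "((real^'m::finite) set \<times> (real^'m \<Rightarrow> 'a)) set \<Rightarrow> ('a \<Rightarrow> 'd::finite symp_vec) \<Rightarrow> 'a \<Rightarrow> 'd symp_vec set" where
  "tangent_space A f p = {\<xi>. \<exists>(U, \<phi>)\<in>A. \<exists>u\<in>U. \<phi> u = p \<and>
       (\<exists>D. ((f \<circ> \<phi>) has_derivative D) (at u) \<and> \<xi> \<in> range D)}"

definition condition_LL ::
  "'a topology \<Rightarrow> ((real^'m::finite) set \<times> (real^'m \<Rightarrow> 'a)) set \<Rightarrow> ('a \<Rightarrow> 'd::finite symp_vec) \<Rightarrow> bool" where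
  "condition_LL X A f \<longleftrightarrow> (\<forall>P. \<exists>x\<in>topspace X. \<not> tangent_space A f x \<subseteq> symp_compl (f x - P))"

end

theory Submission imports Defs begin

definition Jm :: "'d::finite symp_vec \<Rightarrow> 'd symp_vec" where
  "Jm y = (snd y, - fst y)"

lemma omega_inner: "omega x y = x \<bullet> Jm y"
  by (cases x; cases y) (simp add: omega_def Jm_def inner_vec_def sum_subtractf sum_negf algebra_simps)

lemma bounded_linear_Jm: "bounded_linear Jm"
  unfolding Jm_def by (intro bounded_linear_Pair bounded_linear_fst bounded_linear_snd bounded_linear_minus)

lemma bb_omega: "bounded_bilinear omega"
proof -
  have "bounded_bilinear (\<lambda>x y. id x \<bullet> Jm y)"
    by (rule bounded_bilinear.comp[OF bounded_bilinear_inner]) (auto simp: bounded_linear_Jm bounded_linear_ident[unfolded id_def] id_def)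
  then show ?thesis by (simp add: omega_inner[abs_def])
qed

lemma omega_antisym: "omega x y = - omega y x"
  by (simp add: omega_def sum_negf[symmetric] algebra_simps)

lemma dir_deriv:
  fixes q :: "'a::real_normed_vector \<Rightarrow> real"
  assumes "(q has_derivative Q) (at (x + s *\<^sub>R a))"
  shows "((\<lambda>t. q (x + t *\<^sub>R a)) has_real_derivative Q a) (at s)"
proof -
  have l: "((\<lambda>t. x + t *\<^sub>R a) has_derivative (\<lambda>t. t *\<^sub>R a)) (at s)"
    by (auto intro!: derivative_eq_intros)
  have "((\<lambda>t. q (x + t *\<^sub>R a)) has_derivative (\<lambda>t. Q (t *\<^sub>R a))) (at s)"
    by (rule has_derivative_compose[OF l assms])
  moreover have "(\<lambda>t. Q (t *\<^sub>R a)) = (*) (Q a)"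
    using has_derivative_bounded_linear[OF assms]
    by (auto simp: fun_eq_iff linear_simps bounded_linear.linear)
  ultimately show ?thesis by (simp add: has_field_derivative_def)
qed

lemma mixed_mvt:
  fixes p :: "'a::real_normed_vector \<Rightarrow> real"
  assumes dp: "\<And>x. x\<in>U \<Longrightarrow> (p has_derivative P x) (at x)"
    and dPa: "\<And>x. x\<in>U \<Longrightarrow> ((\<lambda>y. P y a) has_derivative Pa x) (at x)"
    and h: "0<h" and sq: "\<And>s t. 0\<le>s \<Longrightarrow> s\<le>h \<Longrightarrow> 0\<le>t \<Longrightarrow> t\<le>h \<Longrightarrow> u + s*\<^sub>R a + t*\<^sub>R b \<in> U"
  shows "\<exists>\<sigma> \<tau>. 0<\<sigma> \<and> \<sigma><h \<and> 0<\<tau> \<and> \<tau><h \<and>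
     p(u + h*\<^sub>R a + h*\<^sub>R b) - p(u + h*\<^sub>R a) - p(u + h*\<^sub>R b) + p u = h*h*Pa (u + \<sigma>*\<^sub>R a + \<tau>*\<^sub>R b) b"
proof -
  have "\<exists>z. 0 < z \<and> z < h \<and>
     (\<lambda>s. p (u + h*\<^sub>R b + s *\<^sub>R a) - p (u + s *\<^sub>R a)) h - (\<lambda>s. p (u + h*\<^sub>R b + s *\<^sub>R a) - p (u + s *\<^sub>R a)) 0
       = (h - 0) * (P (u + h*\<^sub>R b + z *\<^sub>R a) a - P (u + z *\<^sub>R a) a)"
  proof (rule MVT2[OF h])
    fix s assume s: "0 \<le> s" "s \<le> h"
    have m1: "u + h*\<^sub>R b + s *\<^sub>R a \<in> U" using sq[OF s, of h] h by (simp add: algebra_simps)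
    have m2: "u + s *\<^sub>R a \<in> U" using sq[OF s, of 0] h by simp
    show "((\<lambda>s. p (u + h*\<^sub>R b + s *\<^sub>R a) - p (u + s *\<^sub>R a)) has_real_derivative
            (P (u + h*\<^sub>R b + s *\<^sub>R a) a - P (u + s *\<^sub>R a) a)) (at s)"
      by (intro DERIV_diff dir_deriv dp m1 m2)
  qed
  then obtain \<sigma> where \<sigma>: "0 < \<sigma>" "\<sigma> < h" and
    e1: "p (u + h*\<^sub>R b + h *\<^sub>R a) - p (u + h *\<^sub>R a) - (p (u + h*\<^sub>R b) - p u)
       = h * (P (u + h*\<^sub>R b + \<sigma> *\<^sub>R a) a - P (u + \<sigma> *\<^sub>R a) a)" by auto
  have "\<exists>z. 0 < z \<and> z < h \<and>
     (\<lambda>t. P (u + \<sigma> *\<^sub>R a + t *\<^sub>R b) a) h - (\<lambda>t. P (u + \<sigma> *\<^sub>R a + t *\<^sub>R b) a) 0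
       = (h - 0) * Pa (u + \<sigma> *\<^sub>R a + z *\<^sub>R b) b"
  proof (rule MVT2[OF h])
    fix t assume t: "0 \<le> t" "t \<le> h"
    have m1: "u + \<sigma> *\<^sub>R a + t *\<^sub>R b \<in> U" using sq[of \<sigma> t] \<sigma> t by simp
    show "((\<lambda>t. P (u + \<sigma> *\<^sub>R a + t *\<^sub>R b) a) has_real_derivative
            Pa (u + \<sigma> *\<^sub>R a + t *\<^sub>R b) b) (at t)"
      by (rule dir_deriv[where q="\<lambda>y. P y a"]) (rule dPa[OF m1])
  qed
  then obtain \<tau> where \<tau>: "0 < \<tau>" "\<tau> < h" and
    e2: "P (u + \<sigma> *\<^sub>R a + h *\<^sub>R b) a - P (u + \<sigma> *\<^sub>R a) a = h * Pa (u + \<sigma> *\<^sub>R a + \<tau> *\<^sub>R b) b"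
    by auto
  have "u + h*\<^sub>R b + \<sigma> *\<^sub>R a = u + \<sigma> *\<^sub>R a + h *\<^sub>R b" "u + h*\<^sub>R b + h *\<^sub>R a = u + h *\<^sub>R a + h *\<^sub>R b"
    by (simp_all add: algebra_simps)
  then have "p(u + h*\<^sub>R a + h*\<^sub>R b) - p(u + h*\<^sub>R a) - p(u + h*\<^sub>R b) + p u = h*h*Pa (u + \<sigma>*\<^sub>R a + \<tau>*\<^sub>R b) b"
    using e1 e2 by (simp add: algebra_simps)
  then show ?thesis using \<sigma> \<tau> by blast
qed

lemma schwarz:
  fixes p :: "'a::real_normed_vector \<Rightarrow> real"
  assumes U: "open U" "u \<in> U"
    and dp: "\<And>x. x\<in>U \<Longrightarrow> (p has_derivative P x) (at x)"
    and dPa: "\<And>x. x\<in>U \<Longrightarrow> ((\<lambda>y. P y a) has_derivative Pa x) (at x)"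
    and dPb: "\<And>x. x\<in>U \<Longrightarrow> ((\<lambda>y. P y b) has_derivative Pb x) (at x)"
    and ca: "continuous_on U (\<lambda>x. Pa x b)" and cb: "continuous_on U (\<lambda>x. Pb x a)"
  shows "Pa u b = Pb u a"
proof (rule ccontr)
  assume ne: "Pa u b \<noteq> Pb u a"
  define e where "e = \<bar>Pa u b - Pb u a\<bar> / 3"
  have e: "e > 0" using ne by (simp add: e_def)
  obtain d0 where d0: "d0 > 0" "ball u d0 \<subseteq> U" using U open_contains_ball by blast
  obtain d1 where d1: "d1 > 0" "\<And>x. x \<in> U \<Longrightarrow> dist x u < d1 \<Longrightarrow> dist (Pa x b) (Pa u b) < e"
    using ca U e unfolding continuous_on_iff by blast
  obtain d2 where d2: "d2 > 0" "\<And>x. x \<in> U \<Longrightarrow> dist x u < d2 \<Longrightarrow> dist (Pb x a) (Pb u a) < e"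
    using cb U e unfolding continuous_on_iff by blast
  define K where "K = norm a + norm b + 1"
  have K: "K > 0" unfolding K_def by (simp add: add_nonneg_pos)
  define h where "h = min d0 (min d1 d2) / (2 * K)"
  have h: "h > 0" using d0 d1 d2 K by (simp add: h_def)
  have close: "dist (u + s *\<^sub>R a + t *\<^sub>R b) u < min d0 (min d1 d2)"
    if "0 \<le> s" "s \<le> h" "0 \<le> t" "t \<le> h" for s t
  proof -
    have "dist (u + s *\<^sub>R a + t *\<^sub>R b) u = norm (s *\<^sub>R a + t *\<^sub>R b)" by (simp add: dist_norm)
    also have "\<dots> \<le> s * norm a + t * norm b"
      using that norm_triangle_ineq[of "s *\<^sub>R a" "t *\<^sub>R b"] by simp
    also have "\<dots> \<le> h * norm a + h * norm b"
      using that by (intro add_mono mult_right_mono) auto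
    also have "\<dots> < h * K" using h by (simp add: K_def algebra_simps)
    also have "h * K = min d0 (min d1 d2) / 2" using K by (simp add: h_def)
    also have "\<dots> < min d0 (min d1 d2)" using d0 d1 d2 by (simp add: min_def)
    finally show ?thesis .
  qed
  have inU: "u + s *\<^sub>R a + t *\<^sub>R b \<in> U" if "0 \<le> s" "s \<le> h" "0 \<le> t" "t \<le> h" for s t
    using close[OF that] d0 by (auto simp: dist_commute subset_iff)
  have inU': "u + s *\<^sub>R b + t *\<^sub>R a \<in> U" if "0 \<le> s" "s \<le> h" "0 \<le> t" "t \<le> h" for s t
    using inU[of t s] that by (simp add: algebra_simps)
  obtain \<sigma> \<tau> where st: "0<\<sigma>" "\<sigma><h" "0<\<tau>" "\<tau><h" and
     E1: "p(u + h*\<^sub>R a + h*\<^sub>R b) - p(u + h*\<^sub>R a) - p(u + h*\<^sub>R b) + p u = h*h*Pa (u + \<sigma>*\<^sub>R a + \<tau>*\<^sub>R b) b"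
    using mixed_mvt[OF dp dPa h inU] by blast
  obtain \<sigma>' \<tau>' where st': "0<\<sigma>'" "\<sigma>'<h" "0<\<tau>'" "\<tau>'<h" and
     E2: "p(u + h*\<^sub>R b + h*\<^sub>R a) - p(u + h*\<^sub>R b) - p(u + h*\<^sub>R a) + p u = h*h*Pb (u + \<sigma>'*\<^sub>R b + \<tau>'*\<^sub>R a) a"
    using mixed_mvt[OF dp dPb h inU'] by blast
  have "u + h*\<^sub>R b + h*\<^sub>R a = u + h*\<^sub>R a + h*\<^sub>R b" by (simp add: algebra_simps)
  with E1 E2 have "h*h*Pa (u + \<sigma>*\<^sub>R a + \<tau>*\<^sub>R b) b = h*h*Pb (u + \<sigma>'*\<^sub>R b + \<tau>'*\<^sub>R a) a"
    by (simp add: algebra_simps)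
  with h have eq: "Pa (u + \<sigma>*\<^sub>R a + \<tau>*\<^sub>R b) b = Pb (u + \<sigma>'*\<^sub>R b + \<tau>'*\<^sub>R a) a"
    by simp
  have c1: "dist (u + \<sigma>*\<^sub>R a + \<tau>*\<^sub>R b) u < min d0 (min d1 d2)" using close st by simp
  have c2: "dist (u + \<tau>'*\<^sub>R a + \<sigma>'*\<^sub>R b) u < min d0 (min d1 d2)" using close st' by simp
  have "u + \<tau>'*\<^sub>R a + \<sigma>'*\<^sub>R b = u + \<sigma>'*\<^sub>R b + \<tau>'*\<^sub>R a" by (simp add: algebra_simps)
  with c2 have c2': "dist (u + \<sigma>'*\<^sub>R b + \<tau>'*\<^sub>R a) u < min d0 (min d1 d2)" by simp
  have f1: "dist (Pa (u + \<sigma>*\<^sub>R a + \<tau>*\<^sub>R b) b) (Pa u b) < e"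
    using d1(2)[OF inU] c1 st by simp
  have f2: "dist (Pb (u + \<sigma>'*\<^sub>R b + \<tau>'*\<^sub>R a) a) (Pb u a) < e"
    using d2(2)[OF inU'] c2' st' by simp
  have ar: "\<And>A B x y::real. \<bar>A - x\<bar> < \<bar>x - y\<bar> / 3 \<Longrightarrow> \<bar>B - y\<bar> < \<bar>x - y\<bar> / 3 \<Longrightarrow> A = B \<Longrightarrow> x \<noteq> y \<Longrightarrow> False"
    by (cases "x < y") (auto simp: abs_if split: if_splits)
  from f1 f2 eq ne show False unfolding e_def dist_real_def by (rule ar)
qed

lemma lagr:
  fixes W :: "'d::finite symp_vec set"
  assumes sW: "subspace W" and dW: "dim W \<ge> CARD('d)"
    and iso: "\<And>x y. x\<in>W \<Longrightarrow> y\<in>W \<Longrightarrow> omega x y = 0"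
    and v: "\<And>x. x\<in>W \<Longrightarrow> omega x v = 0"
  shows "v \<in> W"
proof -
  let ?B = "{y. \<forall>x\<in>W. orthogonal x y}"
  have "dim {y \<in> UNIV. \<forall>x\<in>W. orthogonal x y} + dim W = dim (UNIV :: 'd symp_vec set)"
    by (rule dim_subspace_orthogonal_to_vectors) (auto simp: sW)
  hence dB: "dim ?B + dim W = 2 * CARD('d)" by simp
  have lin: "linear Jm" using bounded_linear_Jm bounded_linear.linear by blast
  have injJ: "inj Jm" by (auto simp: inj_def Jm_def prod_eq_iff)
  have dJ: "dim (Jm ` W) = dim W"
    by (rule dim_image_eq[OF lin]) (use injJ in \<open>auto simp: inj_on_def\<close>)
  have sub: "Jm ` W \<subseteq> ?B"
    using iso by (auto simp: orthogonal_def omega_inner)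
  have eq: "Jm ` W = ?B"
  proof (rule subspace_dim_equal)
    show "subspace (Jm ` W)" by (rule linear_subspace_image[OF lin sW])
    show "subspace ?B" by (rule subspace_orthogonal_to_vectors)
    show "Jm ` W \<subseteq> ?B" by (rule sub)
    show "dim ?B \<le> dim (Jm ` W)" using dB dW dJ by linarith
  qed
  have "Jm v \<in> ?B" using v by (auto simp: orthogonal_def omega_inner)
  then have "Jm v \<in> Jm ` W" using eq by simp
  then show ?thesis using injJ by (metis inj_image_mem_iff)
qed

lemma sum_axis: "(\<Sum>k\<in>UNIV. axis i (1::real) $ k *\<^sub>R (F k :: 'b::real_vector)) = F i"
proof -
  have "\<And>k. axis i (1::real) $ k *\<^sub>R F k = (if k = i then F k else 0)" by (simp add: axis_def)
  then show ?thesis by simp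
qed

lemma omega_lin_left: "bounded_linear (\<lambda>y. omega y w)"
  by (rule bounded_bilinear.bounded_linear_left[OF bb_omega])

lemma local_key:
  fixes g :: "real^'m::finite \<Rightarrow> 'd::finite symp_vec"
  assumes U: "open U" "u \<in> U" and sm: "smooth_on U g" and card: "CARD('m) \<ge> CARD('d)"
    and dg: "(g has_derivative D) (at u)" and inj: "inj D"
    and H: "\<And>x D' h. x\<in>U \<Longrightarrow> (g has_derivative D') (at x) \<Longrightarrow> omega (D' h) (g x - P) = 0"
  shows "\<exists>h. D h = g u - P"
proof -
  obtain F :: "'m list \<Rightarrow> real^'m \<Rightarrow> 'd symp_vec" where F0: "\<forall>x\<in>U. F [] x = g x"
    and FD: "\<And>is x. x\<in>U \<Longrightarrow> (F is has_derivative (\<lambda>h. \<Sum>i\<in>UNIV. (h $ i) *\<^sub>R F (i # is) x)) (at x)"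
    using sm unfolding smooth_on_def by blast
  have gD: "(g has_derivative (\<lambda>h. \<Sum>i\<in>UNIV. (h $ i) *\<^sub>R F [i] x)) (at x)" if "x \<in> U" for x
    by (rule has_derivative_transform_within_open[OF FD[OF that] U(1) that]) (use F0 in auto)
  have Fcont: "continuous_on U (\<lambda>x. omega (F is x) w)" for "is" w
  proof -
    have "\<forall>x\<in>U. isCont (\<lambda>x. omega (F is x) w) x"
      using has_derivative_continuous[OF bounded_linear.has_derivative[OF omega_lin_left FD]] by blast
    then show ?thesis by (simp add: continuous_at_imp_continuous_on)
  qed
  have Hi: "omega (F [i] x) (F [] x - P) = 0" if "x \<in> U" for x i
    using H[OF that gD[OF that], of "axis i 1"] F0 that by (simp add: sum_axis)
  define w where "w = g u - P"
  have step1: "omega (F [i] u) (F [j] u) + omega (F [j, i] u) w = 0" for i j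
  proof -
    have d: "((\<lambda>x. omega (F [i] x) (F [] x - P)) has_derivative
       (\<lambda>h. omega (F [i] u) (\<Sum>k\<in>UNIV. (h $ k) *\<^sub>R F [k] u) + omega (\<Sum>k\<in>UNIV. (h $ k) *\<^sub>R F [k, i] u) (F [] u - P))) (at u)"
      by (rule bounded_bilinear.FDERIV[OF bb_omega FD[OF U(2)]]) (auto intro!: derivative_eq_intros FD[OF U(2)])
    have "((\<lambda>x. 0) has_derivative
       (\<lambda>h. omega (F [i] u) (\<Sum>k\<in>UNIV. (h $ k) *\<^sub>R F [k] u) + omega (\<Sum>k\<in>UNIV. (h $ k) *\<^sub>R F [k, i] u) (F [] u - P))) (at u)"
      by (rule has_derivative_transform_within_open[OF d U]) (use Hi in auto)
    then have Z: "(\<lambda>h. omega (F [i] u) (\<Sum>k\<in>UNIV. (h $ k) *\<^sub>R F [k] u) + omega (\<Sum>k\<in>UNIV. (h $ k) *\<^sub>R F [k, i] u) (F [] u - P)) = (\<lambda>h. 0)"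
      by (rule has_derivative_unique[OF _ has_derivative_const])
    show ?thesis using fun_cong[OF Z, of "axis j 1"] F0 U by (simp add: sum_axis w_def)
  qed
  have sym: "omega (F [j, i] u) w = omega (F [i, j] u) w" for i j
  proof -
    let ?p = "\<lambda>x. omega (F [] x) w"
    let ?P = "\<lambda>x h. omega (\<Sum>k\<in>UNIV. (h $ k) *\<^sub>R F [k] x) w"
    let ?Pa = "\<lambda>x h. omega (\<Sum>k\<in>UNIV. (h $ k) *\<^sub>R F [k, i] x) w"
    let ?Pb = "\<lambda>x h. omega (\<Sum>k\<in>UNIV. (h $ k) *\<^sub>R F [k, j] x) w"
    have "?Pa u (axis j 1) = ?Pb u (axis i 1)"
    proof (rule schwarz[OF U, where p="?p" and P="?P" and a="axis i 1" and b="axis j 1" and Pa="?Pa" and Pb="?Pb"])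
      fix x assume x: "x \<in> U"
      show "(?p has_derivative ?P x) (at x)"
        by (rule bounded_linear.has_derivative[OF omega_lin_left FD[OF x]])
      have e1: "(\<lambda>y. ?P y (axis i 1)) = (\<lambda>y. omega (F [i] y) w)" by (simp add: sum_axis)
      show "((\<lambda>y. ?P y (axis i 1)) has_derivative ?Pa x) (at x)"
        unfolding e1 by (rule bounded_linear.has_derivative[OF omega_lin_left FD[OF x]])
      have e2: "(\<lambda>y. ?P y (axis j 1)) = (\<lambda>y. omega (F [j] y) w)" by (simp add: sum_axis)
      show "((\<lambda>y. ?P y (axis j 1)) has_derivative ?Pb x) (at x)"
        unfolding e2 by (rule bounded_linear.has_derivative[OF omega_lin_left FD[OF x]])
    next
      show "continuous_on U (\<lambda>x. ?Pa x (axis j 1))" using Fcont by (simp add: sum_axis)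
      show "continuous_on U (\<lambda>x. ?Pb x (axis i 1))" using Fcont by (simp add: sum_axis)
    qed
    then show ?thesis by (simp add: sum_axis)
  qed
  have isoF: "omega (F [i] u) (F [j] u) = 0" for i j
    using step1[of i j] step1[of j i] sym[of i j] omega_antisym[of "F [i] u" "F [j] u"] by linarith
  have Deq: "D = (\<lambda>h. \<Sum>i\<in>UNIV. (h $ i) *\<^sub>R F [i] u)"
    by (rule has_derivative_unique[OF dg gD[OF U(2)]])
  have linD: "linear D" using dg has_derivative_linear by blast
  have iso: "omega (D h) (D k) = 0" for h k
    unfolding Deq
    by (simp add: bounded_bilinear.sum_left[OF bb_omega] bounded_bilinear.sum_right[OF bb_omega]
        bounded_bilinear.scaleR_left[OF bb_omega] bounded_bilinear.scaleR_right[OF bb_omega] isoF)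
  have dimR: "dim (range D) = CARD('m)"
    using dim_image_eq[OF linD, of UNIV] inj by (simp add: inj_on_def inj_def)
  have "w \<in> range D"
  proof (rule lagr)
    show "subspace (range D)" by (rule linear_subspace_image[OF linD subspace_UNIV])
    show "CARD('d) \<le> dim (range D)" using dimR card by simp
    show "\<And>x y. x \<in> range D \<Longrightarrow> y \<in> range D \<Longrightarrow> omega x y = 0" using iso by auto
    show "\<And>x. x \<in> range D \<Longrightarrow> omega x w = 0" using H[OF U(2) dg] by (auto simp: w_def)
  qed
  then show ?thesis by (auto simp: w_def)
qed

theorem mainTheorem14:
  fixes X :: "'a topology"
    and A :: "((real^'m::finite) set \<times> (real^'m \<Rightarrow> 'a)) set"
    and f :: "'a \<Rightarrow> (real^'d::finite) \<times> (real^'d)"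
  assumes "closed_immersed_manifold X A f"
    and "CARD('m) \<ge> CARD('d)"
  shows "condition_LL X A f"
proof (rule ccontr)
  assume "\<not> condition_LL X A f"
  then obtain P where H0: "\<And>x. x \<in> topspace X \<Longrightarrow> tangent_space A f x \<subseteq> symp_compl (f x - P)"
    unfolding condition_LL_def by blast
  have cpt: "compact_space X" and ne: "topspace X \<noteq> {}"
    and cover: "topspace X = (\<Union>(U, \<phi>)\<in>A. \<phi> ` U)"
    using assms(1) unfolding closed_immersed_manifold_def by blast+
  have chart: "open U \<and> openin X (\<phi> ` U) \<and>
        homeomorphic_map (subtopology euclidean U) (subtopology X (\<phi> ` U)) \<phi> \<and>
        smooth_on U (f \<circ> \<phi>) \<and>
        (\<forall>u\<in>U. \<exists>D. ((f \<circ> \<phi>) has_derivative D) (at u) \<and> inj D)" if "(U, \<phi>) \<in> A" for U \<phi>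
    using assms(1) that unfolding closed_immersed_manifold_def by fast
  have inTop: "\<phi> u \<in> topspace X" if "(U, \<phi>) \<in> A" "u \<in> U" for U \<phi> u
    using chart[OF that(1)] that(2) openin_subset by fast
  have Hloc: "omega (D' h) ((f \<circ> \<phi>) x - P) = 0"
    if "(U, \<phi>) \<in> A" "x \<in> U" "((f \<circ> \<phi>) has_derivative D') (at x)" for U \<phi> x D' h
  proof -
    have "D' h \<in> tangent_space A f (\<phi> x)"
      unfolding tangent_space_def using that by blast
    then show ?thesis using H0[OF inTop[OF that(1,2)]] by (auto simp: symp_compl_def)
  qed
  have key: "\<exists>h. D h = (f \<circ> \<phi>) u - P"
    if "(U, \<phi>) \<in> A" "u \<in> U" "((f \<circ> \<phi>) has_derivative D) (at u)" "inj D" for U \<phi> u D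
    by (rule local_key[OF _ that(2) _ assms(2) that(3,4)])
       (use chart[OF that(1)] Hloc[OF that(1)] in auto)
  have contg: "continuous_on U (f \<circ> \<phi>)" if "(U, \<phi>) \<in> A" for U \<phi>
  proof -
    have "\<forall>u\<in>U. isCont (f \<circ> \<phi>) u"
      using chart[OF that] has_derivative_continuous by blast
    then show ?thesis by (rule continuous_at_imp_continuous_on)
  qed
  have cont: "continuous_map X euclidean f"
    unfolding continuous_map_def
  proof safe
    fix V :: "'d symp_vec set" assume "openin euclidean V"
    then have oV: "open V" by simp
    show "openin X {x \<in> topspace X. f x \<in> V}"
    proof (subst openin_subopen, intro ballI)
      fix x assume x: "x \<in> {x \<in> topspace X. f x \<in> V}"
      then obtain U \<phi> u where A: "(U, \<phi>) \<in> A" and u: "u \<in> U" and xu: "x = \<phi> u"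
        using cover by auto
      define S where "S = U \<inter> (f \<circ> \<phi>) -` V"
      have oS: "open S" unfolding S_def
        by (rule continuous_open_preimage[OF contg[OF A]]) (use chart[OF A] oV in auto)
      have "openin (subtopology euclidean U) S"
        by (rule open_subset[OF _ oS]) (auto simp: S_def)
      then have "openin (subtopology X (\<phi> ` U)) (\<phi> ` S)"
        using homeomorphic_map_openness[of "subtopology euclidean U" "subtopology X (\<phi> ` U)" \<phi> S]
          chart[OF A] by (auto simp: S_def)
      then have oT: "openin X (\<phi> ` S)"
        using openin_trans_full chart[OF A] by blast
      have "\<phi> ` S \<subseteq> {x \<in> topspace X. f x \<in> V}"
        using inTop[OF A] by (auto simp: S_def)
      moreover have "x \<in> \<phi> ` S" using x u xu by (auto simp: S_def)
      ultimately show "\<exists>T. openin X T \<and> x \<in> T \<and> T \<subseteq> {x \<in> topspace X. f x \<in> V}"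
        using oT by blast
    qed
  qed auto
  have "compactin euclidean ((\<lambda>x. norm (f x - P)) ` topspace X)"
    by (rule image_compactin[OF cpt[unfolded compact_space_def]])
       (intro continuous_map_norm continuous_map_diff cont continuous_map_const[THEN iffD2]; simp)
  then obtain n0 where "n0 \<in> (\<lambda>x. norm (f x - P)) ` topspace X"
    and "\<forall>t\<in>(\<lambda>x. norm (f x - P)) ` topspace X. t \<le> n0"
    using compact_attains_sup[of "(\<lambda>x. norm (f x - P)) ` topspace X"] ne by auto
  then obtain x0 where x0: "x0 \<in> topspace X" and mx: "\<And>x. x \<in> topspace X \<Longrightarrow> norm (f x - P) \<le> norm (f x0 - P)"
    by auto
  obtain U \<phi> u0 where A: "(U, \<phi>) \<in> A" and u0: "u0 \<in> U" and xu: "x0 = \<phi> u0"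
    using cover x0 by auto
  obtain D where dg: "((f \<circ> \<phi>) has_derivative D) (at u0)" and inj: "inj D"
    using chart[OF A] u0 by blast
  obtain h where Dh: "D h = (f \<circ> \<phi>) u0 - P" using key[OF A u0 dg inj] by blast
  define w where "w = (f \<circ> \<phi>) u0 - P"
  have dn: "((\<lambda>y. ((f \<circ> \<phi>) y - P) \<bullet> ((f \<circ> \<phi>) y - P)) has_derivative
      (\<lambda>k. w \<bullet> D k + D k \<bullet> w)) (at u0)"
    unfolding w_def comp_def by (auto intro!: derivative_eq_intros dg[unfolded comp_def])
  have ev: "eventually (\<lambda>y. ((f \<circ> \<phi>) y - P) \<bullet> ((f \<circ> \<phi>) y - P) \<le> ((f \<circ> \<phi>) u0 - P) \<bullet> ((f \<circ> \<phi>) u0 - P)) (at u0)"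
  proof (rule eventually_mono[OF eventually_at_in_open'[of U u0]])
    show "open U" using chart[OF A] by blast
    show "u0 \<in> U" by (rule u0)
    fix y assume "y \<in> U"
    then have "norm ((f \<circ> \<phi>) y - P) \<le> norm ((f \<circ> \<phi>) u0 - P)"
      using mx[OF inTop[OF A]] xu by simp
    then show "((f \<circ> \<phi>) y - P) \<bullet> ((f \<circ> \<phi>) y - P) \<le> ((f \<circ> \<phi>) u0 - P) \<bullet> ((f \<circ> \<phi>) u0 - P)"
      by (metis power2_norm_eq_inner norm_ge_zero power_mono)
  qed
  have "(\<lambda>k. w \<bullet> D k + D k \<bullet> w) = (\<lambda>k. 0)"
    by (rule has_derivative_local_max[OF dn ev])
  then have "w \<bullet> D h + D h \<bullet> w = 0" by metis
  then have "w = 0" using Dh unfolding w_def[symmetric] by simp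
  then have fP: "\<And>x. x \<in> topspace X \<Longrightarrow> f x = P"
    using mx xu unfolding w_def by fastforce
  have "((\<lambda>y. P) has_derivative D) (at u0)"
    by (rule has_derivative_transform_within_open[OF dg, of U])
       (use chart[OF A] u0 fP inTop[OF A] in auto)
  then have "D = (\<lambda>k. 0)" by (rule has_derivative_unique[OF _ has_derivative_const])
  then have "D (axis undefined 1) = D 0" by simp
  with inj have "axis undefined (1::real) = (0 :: real^'m)" by (meson injD)
  then show False by (simp add: axis_eq_0_iff)
qed

end
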